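(* Let $M$ be a $k\times k$ matrix (for some $k\ge1$) with all entries positive integers such that $M^2=5M$. Then, up to conjugation by a permutation matrix, $M$ is one of the following: $N_1=(5)$, $N_2=\begin{pmatrix}4&1\\4&1\end{pmatrix}$, $N_3=\begin{pmatrix}4&4\\1&1\end{pmatrix}$, $N_4=\begin{pmatrix}4&2\\2&1\end{pmatrix}$, $N_5=\begin{pmatrix}3&6\\1&2\end{pmatrix}$, $N_6=\begin{pmatrix}3&3\\2&2\end{pmatrix}$, $N_7=\begin{pmatrix}3&2\\3&2\end{pmatrix}$, $N_8=\begin{pmatrix}3&1\\6&2\end{pmatrix}$, $N_9=\begin{pmatrix}3&1&1\\3&1&1\\3&1&1\end{pmatrix}$, $N_{10}=\begin{pmatrix}3&3&3\\1&1&1\\1&1&1\end{pmatrix}$, $N_{11}=\begin{pmatrix}2&2&2\\2&2&2\\1&1&1\end{pmatrix}$, $N_{12}=\begin{pmatrix}2&4&2\\1&2&1\\1&2&1\end{pmatrix}$, $N_{13}=\begin{pmatrix}2&2&1\\2&2&1\\2&2&1\end{pmatrix}$, $N_{14}$ = the $5\times5$ all-ones matrix, $N_{15}=\begin{pmatrix}2&1&1&1\\2&1&1&1\\2&1&1&1\\2&1&1&1\end{pmatrix}$, $N_{16}=\begin{pmatrix}2&2&2&2\\1&1&1&1\\1&1&1&1\\1&1&1&1\end{pmatrix}$.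
   Context: Conjugation by a permutation matrix means replacing $M$ by $PMP^{-1}$ for a permutation matrix $P$ (simultaneous permutation of rows and columns). *)

theory Defs
  imports "Jordan_Normal_Form.Matrix" "HOL-Combinatorics.Permutations"
begin

definition perm_matrix :: "nat \<Rightarrow> (nat \<Rightarrow> nat) \<Rightarrow> int mat" where
  "perm_matrix n p = mat n n (\<lambda>(i, j). if p j = i then 1 else 0)"

definition perm_conj :: "int mat \<Rightarrow> int mat \<Rightarrow> bool" where
  "perm_conj M N \<longleftrightarrow> (\<exists>p Pinv. p permutes {..<dim_row N} \<and>
      Pinv \<in> carrier_mat (dim_row N) (dim_row N) \<and>
      perm_matrix (dim_row N) p * Pinv = 1\<^sub>m (dim_row N) \<and>
      Pinv * perm_matrix (dim_row N) p = 1\<^sub>m (dim_row N) \<and>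
      M = perm_matrix (dim_row N) p * N * Pinv)"

definition N1 :: "int mat" where "N1 = mat_of_rows_list 1 [[5]]"
definition N2 :: "int mat" where "N2 = mat_of_rows_list 2 [[4,1],[4,1]]"
definition N3 :: "int mat" where "N3 = mat_of_rows_list 2 [[4,4],[1,1]]"
definition N4 :: "int mat" where "N4 = mat_of_rows_list 2 [[4,2],[2,1]]"
definition N5 :: "int mat" where "N5 = mat_of_rows_list 2 [[3,6],[1,2]]"
definition N6 :: "int mat" where "N6 = mat_of_rows_list 2 [[3,3],[2,2]]"
definition N7 :: "int mat" where "N7 = mat_of_rows_list 2 [[3,2],[3,2]]"
definition N8 :: "int mat" where "N8 = mat_of_rows_list 2 [[3,1],[6,2]]"
definition N9 :: "int mat" where "N9 = mat_of_rows_list 3 [[3,1,1],[3,1,1],[3,1,1]]"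
definition N10 :: "int mat" where "N10 = mat_of_rows_list 3 [[3,3,3],[1,1,1],[1,1,1]]"
definition N11 :: "int mat" where "N11 = mat_of_rows_list 3 [[2,2,2],[2,2,2],[1,1,1]]"
definition N12 :: "int mat" where "N12 = mat_of_rows_list 3 [[2,4,2],[1,2,1],[1,2,1]]"
definition N13 :: "int mat" where "N13 = mat_of_rows_list 3 [[2,2,1],[2,2,1],[2,2,1]]"
definition N14 :: "int mat" where "N14 = mat 5 5 (\<lambda>_. 1)"
definition N15 :: "int mat" where "N15 = mat_of_rows_list 4 [[2,1,1,1],[2,1,1,1],[2,1,1,1],[2,1,1,1]]"
definition N16 :: "int mat" where "N16 = mat_of_rows_list 4 [[2,2,2,2],[1,1,1,1],[1,1,1,1],[1,1,1,1]]"

end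

theory Submission
  imports Defs
begin


lemma sort_perm:
  fixes d :: "nat \<Rightarrow> int"
  shows "\<exists>\<sigma>. \<sigma> permutes {..<n} \<and> (\<forall>i j. i \<le> j \<longrightarrow> j < n \<longrightarrow> d (\<sigma> j) \<le> d (\<sigma> i))"
proof -
  define xs where "xs = sort_key (\<lambda>i. - d i) [0..<n]"
  have "mset xs = mset [0..<n]" by (simp add: xs_def)
  then obtain p where p: "p permutes {..<length [0..<n]}" "permute_list p [0..<n] = xs"
    by (rule mset_eq_permutation)
  have pn: "p permutes {..<n}" using p by simp
  have xsn: "\<And>i. i < n \<Longrightarrow> xs ! i = p i"
    using p permute_list_nth[of p "[0..<n]"] permutes_in_image[OF pn] by auto
  have s: "sorted (map (\<lambda>i. - d i) xs)" by (simp add: xs_def)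
  have len: "length xs = n" by (simp add: xs_def)
  show ?thesis
  proof (intro exI conjI allI impI)
    show "p permutes {..<n}" by (rule pn)
    fix i j assume "i \<le> j" "j < n"
    then have "map (\<lambda>i. - d i) xs ! i \<le> map (\<lambda>i. - d i) xs ! j"
      using s len by (intro sorted_nth_mono) auto
    then show "d (p j) \<le> d (p i)" using \<open>i \<le> j\<close> \<open>j < n\<close> len xsn by auto
  qed
qed

lemma delta_sum:
  assumes "p permutes {..<n}" "(i::nat) < n" 
  shows "(\<Sum>l\<in>{0..<n}. (if p l = i then 1 else 0) * (f l :: int)) = f (inv_into UNIV p i)"
proof -
  have "(\<Sum>l\<in>{0..<n}. (if p l = i then 1 else 0) * f l) = (\<Sum>l\<in>{0..<n}. if l = inv_into UNIV p i then f l else 0)"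
  proof (rule sum.cong)
    fix x assume "x \<in> {0..<n}"
    have e: "(p x = i) = (x = inv_into UNIV p i)" using permutes_inv_eq[OF assms(1), of i x] by auto
    show "(if p x = i then 1 else 0) * f x = (if x = inv_into UNIV p i then f x else 0)" by (simp add: e)
  qed simp
  also have "\<dots> = f (inv_into UNIV p i)"
    using assms permutes_in_image[OF permutes_inv[OF assms(1)]] by (subst sum.delta) auto
  finally show ?thesis .
qed

lemma delta_sum2:
  assumes "(i::nat) < n"
  shows "(\<Sum>l\<in>{0..<n}. (f l :: int) * (if l = i then 1 else 0)) = f i"
proof -
  have "(\<Sum>l\<in>{0..<n}. f l * (if l = i then 1 else 0)) = (\<Sum>l\<in>{0..<n}. if l = i then f l else 0)"
    by (rule sum.cong) auto
  also have "\<dots> = f i" by (subst sum.delta; use assms in simp)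
  finally show ?thesis .
qed


lemma mult_entry:
  assumes "A \<in> carrier_mat n n" "B \<in> carrier_mat n n" "i < n" "j < n"
  shows "(A * B) $$ (i,j) = (\<Sum>l\<in>{0..<n}. A $$ (i,l) * B $$ (l,j))"
  using assms by (auto simp: scalar_prod_def intro!: sum.cong)

lemma conj_lemma:
  assumes t: "\<tau> permutes {..<n}" and N: "N \<in> carrier_mat n n" and M: "M \<in> carrier_mat n n"
    and e: "\<forall>i<n. \<forall>j<n. M $$ (i,j) = N $$ (\<tau> i, \<tau> j)"
  shows "perm_conj M N"
proof -
  define p where "p = inv_into UNIV \<tau>"
  have pp: "p permutes {..<n}" unfolding p_def by (rule permutes_inv[OF t])
  have ip: "inv_into UNIV p = \<tau>" unfolding p_def using t by (simp add: permutes_inv_inv)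
  define P where "P = perm_matrix n p"
  define Q where "Q = perm_matrix n \<tau>"
  have dn: "dim_row N = n" using N by auto
  have PC: "P \<in> carrier_mat n n" "Q \<in> carrier_mat n n" by (auto simp: P_def Q_def perm_matrix_def)
  have PQ: "P * Q = 1\<^sub>m n"
  proof (rule eq_matI)
    fix i j assume ij: "i < dim_row (1\<^sub>m n :: int mat)" "j < dim_col (1\<^sub>m n :: int mat)"
    then have "(P * Q) $$ (i,j) = (\<Sum>l\<in>{0..<n}. (if p l = i then 1 else 0) * (if \<tau> j = l then 1 else 0))"
      by (simp add: P_def Q_def perm_matrix_def scalar_prod_def)
    also have "\<dots> = (if \<tau> j = inv_into UNIV p i then 1 else 0)" using delta_sum[OF pp, of i "\<lambda>l. if \<tau> j = l then 1 else 0"] ij by simp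
    also have "\<dots> = 1\<^sub>m n $$ (i,j)" using ij ip t by (auto dest: permutes_inj simp: inj_eq)
    finally show "(P * Q) $$ (i,j) = 1\<^sub>m n $$ (i,j)" .
  qed (use PC in simp_all)
  have QP: "Q * P = 1\<^sub>m n"
  proof (rule eq_matI)
    fix i j assume ij: "i < dim_row (1\<^sub>m n :: int mat)" "j < dim_col (1\<^sub>m n :: int mat)"
    then have "(Q * P) $$ (i,j) = (\<Sum>l\<in>{0..<n}. (if \<tau> l = i then 1 else 0) * (if p j = l then 1 else 0))"
      by (simp add: P_def Q_def perm_matrix_def scalar_prod_def)
    also have "\<dots> = (if p j = inv_into UNIV \<tau> i then 1 else 0)" using delta_sum[OF t, of i "\<lambda>l. if p j = l then 1 else 0"] ij by simp
    also have "\<dots> = 1\<^sub>m n $$ (i,j)" using ij pp unfolding p_def by (auto dest: permutes_inj simp: inj_eq)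
    finally show "(Q * P) $$ (i,j) = 1\<^sub>m n $$ (i,j)" .
  qed (use PC in simp_all)
  have MM: "M = P * N * Q"
  proof (rule eq_matI)
    fix i j assume ij: "i < dim_row (P * N * Q)" "j < dim_col (P * N * Q)"
    then have ij': "i < n" "j < n" using PC N by auto
    have PN: "(P * N) $$ (i, l) = N $$ (\<tau> i, l)" if "l < n" for l
    proof -
      have "(P * N) $$ (i, l) = (\<Sum>a\<in>{0..<n}. (if p a = i then 1 else 0) * N $$ (a, l))"
        using ij' that N PC by (simp add: P_def perm_matrix_def scalar_prod_def)
      also have "\<dots> = N $$ (\<tau> i, l)" using delta_sum[OF pp ij'(1)] ip by simp
      finally show ?thesis .
    qed
    have PNC: "P * N \<in> carrier_mat n n" using PC N by auto
    have "(P * N * Q) $$ (i,j) = (\<Sum>l\<in>{0..<n}. (P * N) $$ (i, l) * Q $$ (l, j))"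
      by (rule mult_entry[OF PNC PC(2) ij'])
    also have "\<dots> = (\<Sum>l\<in>{0..<n}. (P * N) $$ (i, l) * (if l = \<tau> j then 1 else 0))"
      using ij' by (intro sum.cong) (auto simp: Q_def perm_matrix_def)
    also have "\<dots> = (\<Sum>l\<in>{0..<n}. N $$ (\<tau> i, l) * (if l = \<tau> j then 1 else 0))"
      using PN by (intro sum.cong) auto
    also have "\<dots> = N $$ (\<tau> i, \<tau> j)"
      using delta_sum2[of "\<tau> j" n] ij' permutes_in_image[OF t] by simp
    finally show "M $$ (i,j) = (P * N * Q) $$ (i,j)" using e ij' by simp
  qed (use M N PC in simp_all)
  show ?thesis unfolding perm_conj_def dn
    apply (rule exI[of _ p], rule exI[of _ Q])
    using pp PC PQ QP MM unfolding P_def by simp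
qed



definition Good :: "(nat \<Rightarrow> nat \<Rightarrow> int) \<Rightarrow> nat \<Rightarrow> bool" where
  "Good a k \<longleftrightarrow> (\<exists>N\<in>{N1, N2, N3, N4, N5, N6, N7, N8, N9, N10, N11, N12, N13, N14, N15, N16}.
     \<exists>\<rho>. \<rho> permutes {..<k} \<and> N \<in> carrier_mat k k \<and> (\<forall>i<k. \<forall>j<k. a i j = N $$ (\<rho> i, \<rho> j)))"

lemma good_id:
  assumes "N \<in> {N1, N2, N3, N4, N5, N6, N7, N8, N9, N10, N11, N12, N13, N14, N15, N16}"
    "N \<in> carrier_mat k k" "\<forall>i<k. \<forall>j<k. a i j = N $$ (i, j)"
  shows "Good a k"
  unfolding Good_def using assms by (intro bexI[of _ N] exI[of _ id]) auto

lemma all_Suc: "(\<forall>i<Suc n. P i) \<longleftrightarrow> (\<forall>i<n. P i) \<and> P n"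
  by (auto simp: less_Suc_eq)

lemma p1: "x * y = (1::int) \<Longrightarrow> 0 < x \<Longrightarrow> 0 < y \<Longrightarrow> x = 1 \<and> y = 1"
  by (metis pos_zmult_eq_1_iff)

lemma bnd: "x * y = (c::int) \<Longrightarrow> 0 < x \<Longrightarrow> 0 < y \<Longrightarrow> x \<le> c \<and> y \<le> c"
proof -
  assume h: "x * y = c" "0 < x" "0 < y"
  have "x * 1 \<le> x * y" using h by (intro mult_left_mono) auto
  moreover have "1 * y \<le> x * y" using h by (intro mult_right_mono) auto
  ultimately show ?thesis using h by simp
qed
lemma p2: "x * y = (2::int) \<Longrightarrow> 0 < x \<Longrightarrow> 0 < y \<Longrightarrow> (x = 1 \<and> y = 2) \<or> (x = 2 \<and> y = 1)"
proof -
  assume h: "x * y = 2" "0 < x" "0 < y"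
  then have "x \<le> 2" using bnd by blast
  then have "x = 1 \<or> x = 2" using h by auto
  then show ?thesis using h by (auto; presburger)
qed

lemma p3: "x * y = (3::int) \<Longrightarrow> 0 < x \<Longrightarrow> 0 < y \<Longrightarrow> (x = 1 \<and> y = 3) \<or> (x = 3 \<and> y = 1)"
proof -
  assume h: "x * y = 3" "0 < x" "0 < y"
  then have "x \<le> 3" using bnd by blast
  then have "x = 1 \<or> x = 2 \<or> x = 3" using h by auto
  then show ?thesis using h by (auto; presburger)
qed

lemma p4: "x * y = (4::int) \<Longrightarrow> 0 < x \<Longrightarrow> 0 < y \<Longrightarrow> (x = 1 \<and> y = 4) \<or> (x = 2 \<and> y = 2) \<or> (x = 4 \<and> y = 1)"
proof -
  assume h: "x * y = 4" "0 < x" "0 < y"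
  then have "x \<le> 4" using bnd by blast
  then have "x = 1 \<or> x = 2 \<or> x = 3 \<or> x = 4" using h by auto
  then show ?thesis using h by (auto; presburger)
qed

lemma p6: "x * y = (6::int) \<Longrightarrow> 0 < x \<Longrightarrow> 0 < y \<Longrightarrow> (x = 1 \<and> y = 6) \<or> (x = 2 \<and> y = 3) \<or> (x = 3 \<and> y = 2) \<or> (x = 6 \<and> y = 1)"
proof -
  assume h: "x * y = 6" "0 < x" "0 < y"
  then have "x \<le> 6" using bnd by blast
  then have "x = 1 \<or> x = 2 \<or> x = 3 \<or> x = 4 \<or> x = 5 \<or> x = 6" using h by auto
  then show ?thesis using h by (auto; presburger)
qed


lemma all1: "(\<forall>i<(1::nat). P i) \<longleftrightarrow> P 0" by auto
lemma all2: "(\<forall>i<(2::nat). P i) \<longleftrightarrow> P 0 \<and> P 1"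
proof -
  have "(2::nat) = Suc 1" by simp
  then show ?thesis by (simp only: all_Suc all1 conj_assoc)
qed
lemma all3: "(\<forall>i<(3::nat). P i) \<longleftrightarrow> P 0 \<and> P 1 \<and> P 2"
proof -
  have "(3::nat) = Suc 2" by simp
  then show ?thesis by (simp only: all_Suc all2 conj_assoc)
qed
lemma all4: "(\<forall>i<(4::nat). P i) \<longleftrightarrow> P 0 \<and> P 1 \<and> P 2 \<and> P 3"
proof -
  have "(4::nat) = Suc 3" by simp
  then show ?thesis by (simp only: all_Suc all3 conj_assoc)
qed
lemma all5: "(\<forall>i<(5::nat). P i) \<longleftrightarrow> P 0 \<and> P 1 \<and> P 2 \<and> P 3 \<and> P 4"
proof -
  have "(5::nat) = Suc 4" by simp
  then show ?thesis by (simp only: all_Suc all4 conj_assoc)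
qed

lemma mrl_idx: "i < length rs \<Longrightarrow> j < nc \<Longrightarrow> mat_of_rows_list nc rs $$ (i,j) = rs ! i ! j"
  by (simp add: mat_of_rows_list_def)
lemma mrl_car: "mat_of_rows_list nc rs \<in> carrier_mat (length rs) nc"
  by (simp add: mat_of_rows_list_def)

lemma car1: "N1 \<in> carrier_mat 1 1" by (simp add: N1_def mat_of_rows_list_def eval_nat_numeral)
lemma car2: "N2 \<in> carrier_mat 2 2" by (simp add: N2_def mat_of_rows_list_def eval_nat_numeral)
lemma car3: "N3 \<in> carrier_mat 2 2" by (simp add: N3_def mat_of_rows_list_def eval_nat_numeral)
lemma car4: "N4 \<in> carrier_mat 2 2" by (simp add: N4_def mat_of_rows_list_def eval_nat_numeral)
lemma car5: "N5 \<in> carrier_mat 2 2" by (simp add: N5_def mat_of_rows_list_def eval_nat_numeral)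
lemma car6: "N6 \<in> carrier_mat 2 2" by (simp add: N6_def mat_of_rows_list_def eval_nat_numeral)
lemma car7: "N7 \<in> carrier_mat 2 2" by (simp add: N7_def mat_of_rows_list_def eval_nat_numeral)
lemma car8: "N8 \<in> carrier_mat 2 2" by (simp add: N8_def mat_of_rows_list_def eval_nat_numeral)
lemma car9: "N9 \<in> carrier_mat 3 3" by (simp add: N9_def mat_of_rows_list_def eval_nat_numeral)
lemma car10: "N10 \<in> carrier_mat 3 3" by (simp add: N10_def mat_of_rows_list_def eval_nat_numeral)
lemma car11: "N11 \<in> carrier_mat 3 3" by (simp add: N11_def mat_of_rows_list_def eval_nat_numeral)
lemma car12: "N12 \<in> carrier_mat 3 3" by (simp add: N12_def mat_of_rows_list_def eval_nat_numeral)
lemma car13: "N13 \<in> carrier_mat 3 3" by (simp add: N13_def mat_of_rows_list_def eval_nat_numeral)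
lemma car14: "N14 \<in> carrier_mat 5 5" by (simp add: N14_def)
lemma car15: "N15 \<in> carrier_mat 4 4" by (simp add: N15_def mat_of_rows_list_def eval_nat_numeral)
lemma car16: "N16 \<in> carrier_mat 4 4" by (simp add: N16_def mat_of_rows_list_def eval_nat_numeral)









lemma rank1:
  fixes a :: "nat \<Rightarrow> nat \<Rightarrow> int"
  assumes pos: "\<forall>i<k. \<forall>j<k. 0 < a i j"
    and eq: "\<forall>i<k. \<forall>j<k. (\<Sum>l\<in>{0..<k}. a i l * a l j) = 5 * a i j"
    and jj: "j < k" "j' < k"
  shows "\<forall>i<k. \<forall>l<k. a l j * a i j' = a l j' * a i j"
proof -
  define f where "f i = real_of_int (a i j) / real_of_int (a i j')" for i
  have ne: "f ` {..<k} \<noteq> {}" using jj by auto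
  obtain i0 where i0: "i0 \<in> {..<k}" "f i0 = Min (f ` {..<k})"
    using Min_in[OF finite_imageI[OF finite_lessThan] ne] by auto
  have le: "a i0 j * a i j' \<le> a i j * a i0 j'" if "i < k" for i
  proof -
    have "f i0 \<le> f i" using i0 that by (simp add: Min_le)
    moreover have "0 < real_of_int (a i j')" "0 < real_of_int (a i0 j')" using pos that i0 jj by auto
    ultimately have "real_of_int (a i0 j) * real_of_int (a i j') \<le> real_of_int (a i j) * real_of_int (a i0 j')"
      unfolding f_def by (simp add: field_simps)
    then have "real_of_int (a i0 j * a i j') \<le> real_of_int (a i j * a i0 j')" by (simp only: of_int_mult)
    then show ?thesis by (simp only: of_int_le_iff)
  qed
  define w where "w l = a i0 j' * a l j - a i0 j * a l j'" for l
  have wnn: "0 \<le> w l" if "l < k" for l using le[OF that] unfolding w_def by (simp add: mult.commute)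
  have "(\<Sum>l\<in>{0..<k}. a i0 l * w l) = a i0 j' * (\<Sum>l\<in>{0..<k}. a i0 l * a l j) - a i0 j * (\<Sum>l\<in>{0..<k}. a i0 l * a l j')"
  proof -
    have "(\<Sum>l\<in>{0..<k}. a i0 l * w l) = (\<Sum>l\<in>{0..<k}. a i0 j' * (a i0 l * a l j) - a i0 j * (a i0 l * a l j'))"
      unfolding w_def by (rule sum.cong) (simp_all add: algebra_simps)
    also have "\<dots> = a i0 j' * (\<Sum>l\<in>{0..<k}. a i0 l * a l j) - a i0 j * (\<Sum>l\<in>{0..<k}. a i0 l * a l j')"
      by (subst sum_subtractf) (simp only: sum_distrib_left)
    finally show ?thesis .
  qed
  also have "\<dots> = 0" using eq i0 jj by simp
  finally have s0: "(\<Sum>l\<in>{0..<k}. a i0 l * w l) = 0" .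
  have nn: "0 \<le> a i0 l * w l" if "l \<in> {0..<k}" for l
  proof -
    have "0 < a i0 l" "0 \<le> w l" using pos wnn i0 that by auto
    then show ?thesis by simp
  qed
  have "\<forall>l\<in>{0..<k}. a i0 l * w l = 0"
    using s0 sum_nonneg_eq_0_iff[of "{0..<k}" "\<lambda>l. a i0 l * w l"] nn by simp
  then have w0: "w l = 0" if "l < k" for l
  proof -
    have "a i0 l = 0 \<or> w l = 0" using \<open>\<forall>l\<in>{0..<k}. a i0 l * w l = 0\<close> that by simp
    moreover have "0 < a i0 l" using pos i0 that by simp
    ultimately show ?thesis by simp
  qed
  show ?thesis
  proof (intro allI impI)
    fix i l assume il: "i < k" "l < k"
    have A: "a i0 j' * a l j = a i0 j * a l j'" using w0[OF il(2)] unfolding w_def by simp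
    have B: "a i0 j' * a i j = a i0 j * a i j'" using w0[OF il(1)] unfolding w_def by simp
    have "a i0 j' * (a l j * a i j') = (a i0 j' * a l j) * a i j'" by (simp add: algebra_simps)
    also have "\<dots> = (a i0 j * a l j') * a i j'" using A by (rule arg_cong)
    also have "\<dots> = a l j' * (a i0 j * a i j')" by (simp add: algebra_simps)
    also have "\<dots> = a l j' * (a i0 j' * a i j)" using B by simp
    also have "\<dots> = a i0 j' * (a l j' * a i j)" by (simp add: algebra_simps)
    finally have "a i0 j' * (a l j * a i j') = a i0 j' * (a l j' * a i j)" .
    moreover have "0 < a i0 j'" using pos i0 jj by simp
    then have "a i0 j' \<noteq> 0" by simp
    ultimately show "a l j * a i j' = a l j' * a i j" by simp
  qed
qed



lemma n1: "N1 $$ (0,0) = 5"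
  by (simp_all add: N1_def mrl_idx)
lemma g1: "a 0 0 = 5 \<Longrightarrow> Good a 1"
  apply (rule good_id[OF _ car1])
   apply blast
  apply (simp only: all1 conj_assoc n1)
  done
lemma n2: "N2 $$ (0,0) = 4" "N2 $$ (0,1) = 1" "N2 $$ (1,0) = 4" "N2 $$ (1,1) = 1"
  by (simp_all add: N2_def mrl_idx)
lemma g2: "a 0 0 = 4 \<Longrightarrow> a 0 1 = 1 \<Longrightarrow> a 1 0 = 4 \<Longrightarrow> a 1 1 = 1 \<Longrightarrow> Good a 2"
  apply (rule good_id[OF _ car2])
   apply blast
  apply (simp only: all2 conj_assoc n2)
  done
lemma n3: "N3 $$ (0,0) = 4" "N3 $$ (0,1) = 4" "N3 $$ (1,0) = 1" "N3 $$ (1,1) = 1"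
  by (simp_all add: N3_def mrl_idx)
lemma g3: "a 0 0 = 4 \<Longrightarrow> a 0 1 = 4 \<Longrightarrow> a 1 0 = 1 \<Longrightarrow> a 1 1 = 1 \<Longrightarrow> Good a 2"
  apply (rule good_id[OF _ car3])
   apply blast
  apply (simp only: all2 conj_assoc n3)
  done
lemma n4: "N4 $$ (0,0) = 4" "N4 $$ (0,1) = 2" "N4 $$ (1,0) = 2" "N4 $$ (1,1) = 1"
  by (simp_all add: N4_def mrl_idx)
lemma g4: "a 0 0 = 4 \<Longrightarrow> a 0 1 = 2 \<Longrightarrow> a 1 0 = 2 \<Longrightarrow> a 1 1 = 1 \<Longrightarrow> Good a 2"
  apply (rule good_id[OF _ car4])
   apply blast
  apply (simp only: all2 conj_assoc n4)
  done
lemma n5: "N5 $$ (0,0) = 3" "N5 $$ (0,1) = 6" "N5 $$ (1,0) = 1" "N5 $$ (1,1) = 2"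
  by (simp_all add: N5_def mrl_idx)
lemma g5: "a 0 0 = 3 \<Longrightarrow> a 0 1 = 6 \<Longrightarrow> a 1 0 = 1 \<Longrightarrow> a 1 1 = 2 \<Longrightarrow> Good a 2"
  apply (rule good_id[OF _ car5])
   apply blast
  apply (simp only: all2 conj_assoc n5)
  done
lemma n6: "N6 $$ (0,0) = 3" "N6 $$ (0,1) = 3" "N6 $$ (1,0) = 2" "N6 $$ (1,1) = 2"
  by (simp_all add: N6_def mrl_idx)
lemma g6: "a 0 0 = 3 \<Longrightarrow> a 0 1 = 3 \<Longrightarrow> a 1 0 = 2 \<Longrightarrow> a 1 1 = 2 \<Longrightarrow> Good a 2"
  apply (rule good_id[OF _ car6])
   apply blast
  apply (simp only: all2 conj_assoc n6)
  done
lemma n7: "N7 $$ (0,0) = 3" "N7 $$ (0,1) = 2" "N7 $$ (1,0) = 3" "N7 $$ (1,1) = 2"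
  by (simp_all add: N7_def mrl_idx)
lemma g7: "a 0 0 = 3 \<Longrightarrow> a 0 1 = 2 \<Longrightarrow> a 1 0 = 3 \<Longrightarrow> a 1 1 = 2 \<Longrightarrow> Good a 2"
  apply (rule good_id[OF _ car7])
   apply blast
  apply (simp only: all2 conj_assoc n7)
  done
lemma n8: "N8 $$ (0,0) = 3" "N8 $$ (0,1) = 1" "N8 $$ (1,0) = 6" "N8 $$ (1,1) = 2"
  by (simp_all add: N8_def mrl_idx)
lemma g8: "a 0 0 = 3 \<Longrightarrow> a 0 1 = 1 \<Longrightarrow> a 1 0 = 6 \<Longrightarrow> a 1 1 = 2 \<Longrightarrow> Good a 2"
  apply (rule good_id[OF _ car8])
   apply blast
  apply (simp only: all2 conj_assoc n8)
  done
lemma n9: "N9 $$ (0,0) = 3" "N9 $$ (0,1) = 1" "N9 $$ (0,2) = 1" "N9 $$ (1,0) = 3" "N9 $$ (1,1) = 1" "N9 $$ (1,2) = 1" "N9 $$ (2,0) = 3" "N9 $$ (2,1) = 1" "N9 $$ (2,2) = 1"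
  by (simp_all add: N9_def mrl_idx)
lemma g9: "a 0 0 = 3 \<Longrightarrow> a 0 1 = 1 \<Longrightarrow> a 0 2 = 1 \<Longrightarrow> a 1 0 = 3 \<Longrightarrow> a 1 1 = 1 \<Longrightarrow> a 1 2 = 1 \<Longrightarrow> a 2 0 = 3 \<Longrightarrow> a 2 1 = 1 \<Longrightarrow> a 2 2 = 1 \<Longrightarrow> Good a 3"
  apply (rule good_id[OF _ car9])
   apply blast
  apply (simp only: all3 conj_assoc n9)
  done
lemma n10: "N10 $$ (0,0) = 3" "N10 $$ (0,1) = 3" "N10 $$ (0,2) = 3" "N10 $$ (1,0) = 1" "N10 $$ (1,1) = 1" "N10 $$ (1,2) = 1" "N10 $$ (2,0) = 1" "N10 $$ (2,1) = 1" "N10 $$ (2,2) = 1"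
  by (simp_all add: N10_def mrl_idx)
lemma g10: "a 0 0 = 3 \<Longrightarrow> a 0 1 = 3 \<Longrightarrow> a 0 2 = 3 \<Longrightarrow> a 1 0 = 1 \<Longrightarrow> a 1 1 = 1 \<Longrightarrow> a 1 2 = 1 \<Longrightarrow> a 2 0 = 1 \<Longrightarrow> a 2 1 = 1 \<Longrightarrow> a 2 2 = 1 \<Longrightarrow> Good a 3"
  apply (rule good_id[OF _ car10])
   apply blast
  apply (simp only: all3 conj_assoc n10)
  done
lemma n11: "N11 $$ (0,0) = 2" "N11 $$ (0,1) = 2" "N11 $$ (0,2) = 2" "N11 $$ (1,0) = 2" "N11 $$ (1,1) = 2" "N11 $$ (1,2) = 2" "N11 $$ (2,0) = 1" "N11 $$ (2,1) = 1" "N11 $$ (2,2) = 1"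
  by (simp_all add: N11_def mrl_idx)
lemma g11: "a 0 0 = 2 \<Longrightarrow> a 0 1 = 2 \<Longrightarrow> a 0 2 = 2 \<Longrightarrow> a 1 0 = 2 \<Longrightarrow> a 1 1 = 2 \<Longrightarrow> a 1 2 = 2 \<Longrightarrow> a 2 0 = 1 \<Longrightarrow> a 2 1 = 1 \<Longrightarrow> a 2 2 = 1 \<Longrightarrow> Good a 3"
  apply (rule good_id[OF _ car11])
   apply blast
  apply (simp only: all3 conj_assoc n11)
  done
lemma n12: "N12 $$ (0,0) = 2" "N12 $$ (0,1) = 4" "N12 $$ (0,2) = 2" "N12 $$ (1,0) = 1" "N12 $$ (1,1) = 2" "N12 $$ (1,2) = 1" "N12 $$ (2,0) = 1" "N12 $$ (2,1) = 2" "N12 $$ (2,2) = 1"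
  by (simp_all add: N12_def mrl_idx)
lemma g12: "a 0 0 = 2 \<Longrightarrow> a 0 1 = 4 \<Longrightarrow> a 0 2 = 2 \<Longrightarrow> a 1 0 = 1 \<Longrightarrow> a 1 1 = 2 \<Longrightarrow> a 1 2 = 1 \<Longrightarrow> a 2 0 = 1 \<Longrightarrow> a 2 1 = 2 \<Longrightarrow> a 2 2 = 1 \<Longrightarrow> Good a 3"
  apply (rule good_id[OF _ car12])
   apply blast
  apply (simp only: all3 conj_assoc n12)
  done
lemma n13: "N13 $$ (0,0) = 2" "N13 $$ (0,1) = 2" "N13 $$ (0,2) = 1" "N13 $$ (1,0) = 2" "N13 $$ (1,1) = 2" "N13 $$ (1,2) = 1" "N13 $$ (2,0) = 2" "N13 $$ (2,1) = 2" "N13 $$ (2,2) = 1"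
  by (simp_all add: N13_def mrl_idx)
lemma g13: "a 0 0 = 2 \<Longrightarrow> a 0 1 = 2 \<Longrightarrow> a 0 2 = 1 \<Longrightarrow> a 1 0 = 2 \<Longrightarrow> a 1 1 = 2 \<Longrightarrow> a 1 2 = 1 \<Longrightarrow> a 2 0 = 2 \<Longrightarrow> a 2 1 = 2 \<Longrightarrow> a 2 2 = 1 \<Longrightarrow> Good a 3"
  apply (rule good_id[OF _ car13])
   apply blast
  apply (simp only: all3 conj_assoc n13)
  done
lemma n14: "N14 $$ (0,0) = 1" "N14 $$ (0,1) = 1" "N14 $$ (0,2) = 1" "N14 $$ (0,3) = 1" "N14 $$ (0,4) = 1" "N14 $$ (1,0) = 1" "N14 $$ (1,1) = 1" "N14 $$ (1,2) = 1" "N14 $$ (1,3) = 1" "N14 $$ (1,4) = 1" "N14 $$ (2,0) = 1" "N14 $$ (2,1) = 1" "N14 $$ (2,2) = 1" "N14 $$ (2,3) = 1" "N14 $$ (2,4) = 1" "N14 $$ (3,0) = 1" "N14 $$ (3,1) = 1" "N14 $$ (3,2) = 1" "N14 $$ (3,3) = 1" "N14 $$ (3,4) = 1" "N14 $$ (4,0) = 1" "N14 $$ (4,1) = 1" "N14 $$ (4,2) = 1" "N14 $$ (4,3) = 1" "N14 $$ (4,4) = 1"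
  by (simp_all add: N14_def mrl_idx)
lemma g14: "a 0 0 = 1 \<Longrightarrow> a 0 1 = 1 \<Longrightarrow> a 0 2 = 1 \<Longrightarrow> a 0 3 = 1 \<Longrightarrow> a 0 4 = 1 \<Longrightarrow> a 1 0 = 1 \<Longrightarrow> a 1 1 = 1 \<Longrightarrow> a 1 2 = 1 \<Longrightarrow> a 1 3 = 1 \<Longrightarrow> a 1 4 = 1 \<Longrightarrow> a 2 0 = 1 \<Longrightarrow> a 2 1 = 1 \<Longrightarrow> a 2 2 = 1 \<Longrightarrow> a 2 3 = 1 \<Longrightarrow> a 2 4 = 1 \<Longrightarrow> a 3 0 = 1 \<Longrightarrow> a 3 1 = 1 \<Longrightarrow> a 3 2 = 1 \<Longrightarrow> a 3 3 = 1 \<Longrightarrow> a 3 4 = 1 \<Longrightarrow> a 4 0 = 1 \<Longrightarrow> a 4 1 = 1 \<Longrightarrow> a 4 2 = 1 \<Longrightarrow> a 4 3 = 1 \<Longrightarrow> a 4 4 = 1 \<Longrightarrow> Good a 5"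
  apply (rule good_id[OF _ car14])
   apply blast
  apply (simp only: all5 conj_assoc n14)
  done
lemma n15: "N15 $$ (0,0) = 2" "N15 $$ (0,1) = 1" "N15 $$ (0,2) = 1" "N15 $$ (0,3) = 1" "N15 $$ (1,0) = 2" "N15 $$ (1,1) = 1" "N15 $$ (1,2) = 1" "N15 $$ (1,3) = 1" "N15 $$ (2,0) = 2" "N15 $$ (2,1) = 1" "N15 $$ (2,2) = 1" "N15 $$ (2,3) = 1" "N15 $$ (3,0) = 2" "N15 $$ (3,1) = 1" "N15 $$ (3,2) = 1" "N15 $$ (3,3) = 1"
  by (simp_all add: N15_def mrl_idx)
lemma g15: "a 0 0 = 2 \<Longrightarrow> a 0 1 = 1 \<Longrightarrow> a 0 2 = 1 \<Longrightarrow> a 0 3 = 1 \<Longrightarrow> a 1 0 = 2 \<Longrightarrow> a 1 1 = 1 \<Longrightarrow> a 1 2 = 1 \<Longrightarrow> a 1 3 = 1 \<Longrightarrow> a 2 0 = 2 \<Longrightarrow> a 2 1 = 1 \<Longrightarrow> a 2 2 = 1 \<Longrightarrow> a 2 3 = 1 \<Longrightarrow> a 3 0 = 2 \<Longrightarrow> a 3 1 = 1 \<Longrightarrow> a 3 2 = 1 \<Longrightarrow> a 3 3 = 1 \<Longrightarrow> Good a 4"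
  apply (rule good_id[OF _ car15])
   apply blast
  apply (simp only: all4 conj_assoc n15)
  done
lemma n16: "N16 $$ (0,0) = 2" "N16 $$ (0,1) = 2" "N16 $$ (0,2) = 2" "N16 $$ (0,3) = 2" "N16 $$ (1,0) = 1" "N16 $$ (1,1) = 1" "N16 $$ (1,2) = 1" "N16 $$ (1,3) = 1" "N16 $$ (2,0) = 1" "N16 $$ (2,1) = 1" "N16 $$ (2,2) = 1" "N16 $$ (2,3) = 1" "N16 $$ (3,0) = 1" "N16 $$ (3,1) = 1" "N16 $$ (3,2) = 1" "N16 $$ (3,3) = 1"
  by (simp_all add: N16_def mrl_idx)
lemma g16: "a 0 0 = 2 \<Longrightarrow> a 0 1 = 2 \<Longrightarrow> a 0 2 = 2 \<Longrightarrow> a 0 3 = 2 \<Longrightarrow> a 1 0 = 1 \<Longrightarrow> a 1 1 = 1 \<Longrightarrow> a 1 2 = 1 \<Longrightarrow> a 1 3 = 1 \<Longrightarrow> a 2 0 = 1 \<Longrightarrow> a 2 1 = 1 \<Longrightarrow> a 2 2 = 1 \<Longrightarrow> a 2 3 = 1 \<Longrightarrow> a 3 0 = 1 \<Longrightarrow> a 3 1 = 1 \<Longrightarrow> a 3 2 = 1 \<Longrightarrow> a 3 3 = 1 \<Longrightarrow> Good a 4"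
  apply (rule good_id[OF _ car16])
   apply blast
  apply (simp only: all4 conj_assoc n16)
  done
lemma tr01: "Transposition.transpose 0 1 (0::nat) = 1" "Transposition.transpose 0 1 (1::nat) = 0"
  "Transposition.transpose 0 1 (2::nat) = 2"
  by (simp_all add: transpose_def)
lemma g12s: "a 0 0 = 2 \<Longrightarrow> a 0 1 = 1 \<Longrightarrow> a 0 2 = 1 \<Longrightarrow> a 1 0 = 4 \<Longrightarrow> a 1 1 = 2 \<Longrightarrow> a 1 2 = 2 \<Longrightarrow> a 2 0 = 2 \<Longrightarrow> a 2 1 = 1 \<Longrightarrow> a 2 2 = 1 \<Longrightarrow> Good a 3"
  unfolding Good_def
  apply (rule bexI[of _ N12])
   apply (rule exI[of _ "Transposition.transpose 0 1"])
   apply (intro conjI)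
     apply (rule permutes_swap_id; simp)
    apply (rule car12)
   apply (simp only: all3 conj_assoc tr01 n12)
  apply blast
  done


lemma sum1: "(\<Sum>i<(1::nat). f i) = f 0" for f :: "nat \<Rightarrow> int"
  by (simp add: lessThan_nat_numeral)
lemma sum2: "(\<Sum>i<(2::nat). f i) = f 0 + f 1" for f :: "nat \<Rightarrow> int"
  by (simp add: lessThan_nat_numeral)
lemma sum3: "(\<Sum>i<(3::nat). f i) = f 0 + f 1 + f 2" for f :: "nat \<Rightarrow> int"
  by (simp add: lessThan_nat_numeral)
lemma sum4: "(\<Sum>i<(4::nat). f i) = f 0 + f 1 + f 2 + f 3" for f :: "nat \<Rightarrow> int"
  by (simp add: lessThan_nat_numeral)
lemma sum5: "(\<Sum>i<(5::nat). f i) = f 0 + f 1 + f 2 + f 3 + f 4" for f :: "nat \<Rightarrow> int"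
  by (simp add: lessThan_nat_numeral)

lemma int12: "1 \<le> x \<Longrightarrow> x \<le> 2 \<Longrightarrow> x = 1 \<or> x = (2::int)" by auto

lemma case1:
  assumes "a 0 0 = 5" shows "Good a 1"
  using assms by (rule g1)

lemma case2:
  fixes a :: "nat \<Rightarrow> nat \<Rightarrow> int"
  assumes p: "0 < a 0 1" "0 < a 1 0" "0 < a 1 1"
    and s: "a 0 1 * a 1 0 = a 0 0 * a 1 1"
    and desc: "a 1 1 \<le> a 0 0"
    and tr: "a 0 0 + a 1 1 = 5"
  shows "Good a 2"
proof -
  have "1 \<le> a 1 1" "a 1 1 \<le> 2" using tr desc p by linarith+
  then have "a 1 1 = 1 \<or> a 1 1 = 2" by (rule int12)
  then have "(a 0 0 = 4 \<and> a 1 1 = 1) \<or> (a 0 0 = 3 \<and> a 1 1 = 2)" using tr by auto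
  then show ?thesis
  proof (elim disjE conjE)
    assume d: "a 0 0 = 4" "a 1 1 = 1"
    have "a 0 1 * a 1 0 = 4" using s d by simp
    from p4[OF this p(1,2)] show ?thesis
    proof (elim disjE conjE)
      assume "a 0 1 = 1" "a 1 0 = 4" then show ?thesis using d by (intro g2) simp_all
    next
      assume "a 0 1 = 2" "a 1 0 = 2" then show ?thesis using d by (intro g4) simp_all
    next
      assume "a 0 1 = 4" "a 1 0 = 1" then show ?thesis using d by (intro g3) simp_all
    qed
  next
    assume d: "a 0 0 = 3" "a 1 1 = 2"
    have "a 0 1 * a 1 0 = 6" using s d by simp
    from p6[OF this p(1,2)] show ?thesis
    proof (elim disjE conjE)
      assume "a 0 1 = 1" "a 1 0 = 6" then show ?thesis using d by (intro g8) simp_all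
    next
      assume "a 0 1 = 2" "a 1 0 = 3" then show ?thesis using d by (intro g7) simp_all
    next
      assume "a 0 1 = 3" "a 1 0 = 2" then show ?thesis using d by (intro g6) simp_all
    next
      assume "a 0 1 = 6" "a 1 0 = 1" then show ?thesis using d by (intro g5) simp_all
    qed
  qed
qed

lemma case3:
  fixes a :: "nat \<Rightarrow> nat \<Rightarrow> int"
  assumes p: "0 < a 0 1" "0 < a 1 0" "0 < a 0 2" "0 < a 2 0" "0 < a 1 2" "0 < a 2 1" "0 < a 2 2"
    and s01: "a 0 1 * a 1 0 = a 0 0 * a 1 1"
    and s02: "a 0 2 * a 2 0 = a 0 0 * a 2 2"
    and s12: "a 1 2 * a 2 1 = a 1 1 * a 2 2"
    and c012: "a 0 1 * a 1 2 = a 1 1 * a 0 2"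
    and c210: "a 2 1 * a 1 0 = a 1 1 * a 2 0"
    and c102: "a 1 0 * a 0 2 = a 0 0 * a 1 2"
    and desc: "a 1 1 \<le> a 0 0" "a 2 2 \<le> a 1 1"
    and tr: "a 0 0 + a 1 1 + a 2 2 = 5"
  shows "Good a 3"
proof -
  have "a 2 2 = 1" "1 \<le> a 1 1" "a 1 1 \<le> 2" using tr desc p by linarith+
  moreover from this(2,3) have "a 1 1 = 1 \<or> a 1 1 = 2" by (rule int12)
  ultimately have "(a 0 0 = 3 \<and> a 1 1 = 1 \<and> a 2 2 = 1) \<or> (a 0 0 = 2 \<and> a 1 1 = 2 \<and> a 2 2 = 1)"
    using tr by auto
  then show ?thesis
  proof (elim disjE conjE)
    assume d: "a 0 0 = 3" "a 1 1 = 1" "a 2 2 = 1"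
    have "a 1 2 * a 2 1 = 1" using s12 d by simp
    from p1[OF this p(5,6)] have e: "a 1 2 = 1" "a 2 1 = 1" by auto
    have e2: "a 0 2 = a 0 1" "a 2 0 = a 1 0" using c012 c210 d e by simp_all
    have "a 0 1 * a 1 0 = 3" using s01 d by simp
    from p3[OF this p(1,2)] show ?thesis
    proof (elim disjE conjE)
      assume "a 0 1 = 1" "a 1 0 = 3" then show ?thesis using d e e2 by (intro g9) simp_all
    next
      assume "a 0 1 = 3" "a 1 0 = 1" then show ?thesis using d e e2 by (intro g10) simp_all
    qed
  next
    assume d: "a 0 0 = 2" "a 1 1 = 2" "a 2 2 = 1"
    have "a 0 2 * a 2 0 = 2" using s02 d by simp
    from p2[OF this p(3,4)] have A: "(a 0 2 = 1 \<and> a 2 0 = 2) \<or> (a 0 2 = 2 \<and> a 2 0 = 1)" .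
    have "a 1 2 * a 2 1 = 2" using s12 d by simp
    from p2[OF this p(5,6)] have B: "(a 1 2 = 1 \<and> a 2 1 = 2) \<or> (a 1 2 = 2 \<and> a 2 1 = 1)" .
    from A B show ?thesis
    proof (elim disjE conjE)
      assume e: "a 0 2 = 1" "a 2 0 = 2" "a 1 2 = 1" "a 2 1 = 2"
      have f: "a 0 1 = 2" "a 1 0 = 2" using c012 c102 d e by simp_all
      show ?thesis using d e f by (intro g13) simp_all
    next
      assume e: "a 0 2 = 1" "a 2 0 = 2" "a 1 2 = 2" "a 2 1 = 1"
      have f: "a 0 1 = 1" "a 1 0 = 4" using c012 c102 d e by simp_all
      show ?thesis using d e f by (intro g12s) simp_all
    next
      assume e: "a 0 2 = 2" "a 2 0 = 1" "a 1 2 = 1" "a 2 1 = 2"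
      have f: "a 0 1 = 4" "a 1 0 = 1" using c012 c102 d e by simp_all
      show ?thesis using d e f by (intro g12) simp_all
    next
      assume e: "a 0 2 = 2" "a 2 0 = 1" "a 1 2 = 2" "a 2 1 = 1"
      have f: "a 0 1 = 2" "a 1 0 = 2" using c012 c102 d e by simp_all
      show ?thesis using d e f by (intro g11) simp_all
    qed
  qed
qed


lemma case4:
  fixes a :: "nat \<Rightarrow> nat \<Rightarrow> int"
  assumes p: "0 < a 0 1" "0 < a 1 0" "0 < a 0 2" "0 < a 2 0" "0 < a 0 3" "0 < a 3 0"
      "0 < a 1 2" "0 < a 2 1" "0 < a 1 3" "0 < a 3 1" "0 < a 2 3" "0 < a 3 2" "0 < a 3 3"
    and s01: "a 0 1 * a 1 0 = a 0 0 * a 1 1"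
    and s02: "a 0 2 * a 2 0 = a 0 0 * a 2 2"
    and s03: "a 0 3 * a 3 0 = a 0 0 * a 3 3"
    and s12: "a 1 2 * a 2 1 = a 1 1 * a 2 2"
    and s13: "a 1 3 * a 3 1 = a 1 1 * a 3 3"
    and s23: "a 2 3 * a 3 2 = a 2 2 * a 3 3"
    and c102: "a 1 0 * a 0 2 = a 0 0 * a 1 2"
    and c103: "a 1 0 * a 0 3 = a 0 0 * a 1 3"
    and desc: "a 1 1 \<le> a 0 0" "a 2 2 \<le> a 1 1" "a 3 3 \<le> a 2 2"
    and tr: "a 0 0 + a 1 1 + a 2 2 + a 3 3 = 5"
  shows "Good a 4"
proof -
  have d: "a 0 0 = 2" "a 1 1 = 1" "a 2 2 = 1" "a 3 3 = 1" using desc tr p by linarith+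
  have "a 1 2 * a 2 1 = 1" using s12 d by simp
  from p1[OF this p(7,8)] have e12: "a 1 2 = 1" "a 2 1 = 1" by auto
  have "a 1 3 * a 3 1 = 1" using s13 d by simp
  from p1[OF this p(9,10)] have e13: "a 1 3 = 1" "a 3 1 = 1" by auto
  have "a 2 3 * a 3 2 = 1" using s23 d by simp
  from p1[OF this p(11,12)] have e23: "a 2 3 = 1" "a 3 2 = 1" by auto
  have c2: "a 1 0 * a 0 2 = 2" "a 1 0 * a 0 3 = 2" using c102 c103 d e12 e13 by simp_all
  have "a 0 1 * a 1 0 = 2" using s01 d by simp
  from p2[OF this p(1,2)] show ?thesis
  proof (elim disjE conjE)
    assume f: "a 0 1 = 1" "a 1 0 = 2"
    have g: "a 0 2 = 1" "a 0 3 = 1" using c2 f by simp_all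
    have h: "a 2 0 = 2" "a 3 0 = 2" using s02 s03 g d by simp_all
    show ?thesis using d e12 e13 e23 f g h by (intro g15) simp_all
  next
    assume f: "a 0 1 = 2" "a 1 0 = 1"
    have g: "a 0 2 = 2" "a 0 3 = 2" using c2 f by simp_all
    have h: "a 2 0 = 1" "a 3 0 = 1" using s02 s03 g d by simp_all
    show ?thesis using d e12 e13 e23 f g h by (intro g16) simp_all
  qed
qed

lemma case5:
  fixes a :: "nat \<Rightarrow> nat \<Rightarrow> int"
  assumes pos: "\<forall>i<5. \<forall>j<5. 0 < a i j"
    and sy: "\<forall>i<5. \<forall>j<5. a i j * a j i = a i i * a j j"
    and tr: "a 0 0 + a 1 1 + a 2 2 + a 3 3 + a 4 4 = 5"
  shows "Good a 5"
proof -
  have pp: "0 < a i j" if "i < 5" "j < 5" for i j using pos that by simp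
  have d: "a i i = 1" if "i < 5" for i
  proof -
    have "0 < a 0 0" "0 < a 1 1" "0 < a 2 2" "0 < a 3 3" "0 < a 4 4" using pp by simp_all
    then have "a 0 0 = 1" "a 1 1 = 1" "a 2 2 = 1" "a 3 3 = 1" "a 4 4 = 1" using tr by linarith+
    then show ?thesis using that by (auto simp: less_Suc_eq eval_nat_numeral)
  qed
  have e: "a i j = 1" if "i < 5" "j < 5" for i j
  proof -
    have "a i j * a j i = 1" using sy that d by simp
    from p1[OF this pp[OF that] pp[OF that(2,1)]] show ?thesis by simp
  qed
  show ?thesis by (rule g14) (simp_all add: e)
qed

lemma classify:
  fixes a :: "nat \<Rightarrow> nat \<Rightarrow> int"
  assumes pos: "\<forall>i<k. \<forall>j<k. 0 < a i j"
    and R: "\<forall>i<k. \<forall>l<k. \<forall>j<k. \<forall>j'<k. a l j * a i j' = a l j' * a i j"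
    and desc: "\<forall>i j. i \<le> j \<longrightarrow> j < k \<longrightarrow> a j j \<le> a i i"
    and tr: "(\<Sum>i<k. a i i) = 5" and k1: "1 \<le> k"
  shows "Good a k"
proof -
  have pp: "0 < a i j" if "i < k" "j < k" for i j using pos that by simp
  have sy: "a i j * a j i = a i i * a j j" if "i < k" "j < k" for i j
    using R that by simp
  have ch: "a i j * a j l = a j j * a i l" if "i < k" "j < k" "l < k" for i j l
  proof -
    have "a i j * a j l = a i l * a j j" using R that by simp
    then show ?thesis by (simp add: mult.commute)
  qed
  have dd: "a j j \<le> a i i" if "i \<le> j" "j < k" for i j using desc that by simp
  have "(\<Sum>i<k. (1::int)) \<le> (\<Sum>i<k. a i i)"
    by (rule sum_mono) (use pp in \<open>simp add: int_one_le_iff_zero_less\<close>)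
  then have "int k \<le> 5" using tr by simp
  then have "k = 1 \<or> k = 2 \<or> k = 3 \<or> k = 4 \<or> k = 5" using k1 by linarith
  then show ?thesis
  proof (elim disjE)
    assume kk: "k = 1"
    show ?thesis using tr unfolding kk sum1 by (rule case1)
  next
    assume kk: "k = 2"
    show ?thesis unfolding kk
      by (rule case2) (use pp sy dd tr in \<open>simp_all add: kk sum2\<close>)
  next
    assume kk: "k = 3"
    show ?thesis unfolding kk
      using ch[of 0 1 2] ch[of 2 1 0] ch[of 1 0 2]
      by (intro case3) (use pp sy dd tr in \<open>simp_all add: kk sum3\<close>)
  next
    assume kk: "k = 4"
    show ?thesis unfolding kk
      using ch[of 1 0 2] ch[of 1 0 3]
      by (intro case4) (use pp sy dd tr in \<open>simp_all add: kk sum4\<close>)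
  next
    assume kk: "k = 5"
    show ?thesis unfolding kk
      by (rule case5) (use pp sy tr in \<open>simp_all add: kk sum5\<close>)
  qed
qed


theorem mainTheorem10:
  fixes M :: "int mat" and k :: nat
  assumes "k \<ge> 1"
    and "M \<in> carrier_mat k k"
    and "\<forall>i<k. \<forall>j<k. M $$ (i, j) > 0"
    and "M * M = 5 \<cdot>\<^sub>m M"
  shows "\<exists>N \<in> {N1, N2, N3, N4, N5, N6, N7, N8, N9, N10, N11, N12, N13, N14, N15, N16}.
           perm_conj M N"
proof -
  note k1 = assms(1) and MC = assms(2) and posM = assms(3) and sq = assms(4)
  define m where "m i j = M $$ (i, j)" for i j
  have pos: "\<forall>i<k. \<forall>j<k. 0 < m i j" using posM unfolding m_def by simp
  have eq: "\<forall>i<k. \<forall>j<k. (\<Sum>l\<in>{0..<k}. m i l * m l j) = 5 * m i j"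
  proof (intro allI impI)
    fix i j assume ij: "i < k" "j < k"
    have "(M * M) $$ (i, j) = (\<Sum>l\<in>{0..<k}. m i l * m l j)"
      unfolding m_def by (rule mult_entry[OF MC MC ij])
    moreover have "(5 \<cdot>\<^sub>m M) $$ (i, j) = 5 * m i j" using MC ij unfolding m_def by simp
    ultimately show "(\<Sum>l\<in>{0..<k}. m i l * m l j) = 5 * m i j" using sq by simp
  qed
  have R: "\<forall>i<k. \<forall>l<k. \<forall>j<k. \<forall>j'<k. m l j * m i j' = m l j' * m i j"
  proof (intro allI impI)
    fix i l j j' assume h: "i < k" "l < k" "j < k" "j' < k"
    show "m l j * m i j' = m l j' * m i j" using rank1[OF pos eq h(3,4)] h(1,2) by simp
  qed
  have k0: "0 < k" using k1 by simp
  have tr: "(\<Sum>l<k. m l l) = 5"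
  proof -
    have "(\<Sum>l\<in>{0..<k}. m 0 l * m l 0) = (\<Sum>l\<in>{0..<k}. m l l * m 0 0)"
    proof (rule sum.cong)
      fix l assume "l \<in> {0..<k}"
      then have "m l 0 * m 0 l = m l l * m 0 0" using R k0 by simp
      then show "m 0 l * m l 0 = m l l * m 0 0" by (simp add: mult.commute)
    qed simp
    also have "\<dots> = (\<Sum>l\<in>{0..<k}. m l l) * m 0 0" by (simp add: sum_distrib_right)
    finally have "(\<Sum>l\<in>{0..<k}. m l l) * m 0 0 = 5 * m 0 0" using eq k0 by simp
    moreover have "0 < m 0 0" using pos k0 by simp
    ultimately have "(\<Sum>l\<in>{0..<k}. m l l) = 5" by simp
    then show ?thesis by (simp add: atLeast0LessThan)
  qed
  obtain \<sigma> where \<sigma>: "\<sigma> permutes {..<k}" and srt: "\<forall>i j. i \<le> j \<longrightarrow> j < k \<longrightarrow> m (\<sigma> j) (\<sigma> j) \<le> m (\<sigma> i) (\<sigma> i)"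
    using sort_perm[of k "\<lambda>i. m i i"] by blast
  have sk: "\<sigma> i < k" if "i < k" for i using permutes_in_image[OF \<sigma>, of i] that by simp
  define a where "a i j = m (\<sigma> i) (\<sigma> j)" for i j
  have apos: "\<forall>i<k. \<forall>j<k. 0 < a i j" unfolding a_def using pos sk by simp
  have aR: "\<forall>i<k. \<forall>l<k. \<forall>j<k. \<forall>j'<k. a l j * a i j' = a l j' * a i j" unfolding a_def using R sk by simp
  have adesc: "\<forall>i j. i \<le> j \<longrightarrow> j < k \<longrightarrow> a j j \<le> a i i" unfolding a_def using srt by simp
  have atr: "(\<Sum>i<k. a i i) = 5"
  proof -
    have "(\<Sum>i<k. m i i) = (\<Sum>i<k. m (\<sigma> i) (\<sigma> i))"
      using sum.permute[OF \<sigma>, of "\<lambda>i. m i i"] by (simp add: comp_def)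
    then show ?thesis using tr unfolding a_def by simp
  qed
  have "Good a k" by (rule classify[OF apos aR adesc atr k1])
  then obtain N \<rho> where N: "N \<in> {N1, N2, N3, N4, N5, N6, N7, N8, N9, N10, N11, N12, N13, N14, N15, N16}"
    and \<rho>: "\<rho> permutes {..<k}" and NC: "N \<in> carrier_mat k k"
    and ae: "\<forall>i<k. \<forall>j<k. a i j = N $$ (\<rho> i, \<rho> j)"
    unfolding Good_def by blast
  define \<tau> where "\<tau> = \<rho> \<circ> inv_into UNIV \<sigma>"
  have \<tau>: "\<tau> permutes {..<k}" unfolding \<tau>_def by (rule permutes_compose[OF permutes_inv[OF \<sigma>] \<rho>])
  have "perm_conj M N"
  proof (rule conj_lemma[OF \<tau> NC MC], intro allI impI)
    fix i j assume ij: "i < k" "j < k"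
    define i' where "i' = inv_into UNIV \<sigma> i"
    define j' where "j' = inv_into UNIV \<sigma> j"
    have i'k: "i' < k" "j' < k" unfolding i'_def j'_def
      using permutes_in_image[OF permutes_inv[OF \<sigma>]] ij by auto
    have si: "\<sigma> i' = i" "\<sigma> j' = j" unfolding i'_def j'_def using permutes_inverses(1)[OF \<sigma>] by auto
    have "M $$ (i, j) = a i' j'" unfolding a_def m_def using si by simp
    also have "\<dots> = N $$ (\<rho> i', \<rho> j')" using ae i'k by simp
    also have "\<dots> = N $$ (\<tau> i, \<tau> j)" unfolding \<tau>_def i'_def j'_def by simp
    finally show "M $$ (i, j) = N $$ (\<tau> i, \<tau> j)" .
  qed
  then show ?thesis using N by blast
qed

end
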